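(* Let $(\Delta x,\Delta y)\in\mathbb{R}^2$, $(o_x,o_y)\in\mathbb{R}^2$, $(x_0,y_0,\theta_0)\in\mathbb{R}^3$, $R>0$ and $t_{\max}>0$. Consider the forward left-turning arc robot path $$x(t)=x_0-R\sin\theta_0+R\sin(\theta_0+t),\quad y(t)=y_0+R\cos\theta_0-R\cos(\theta_0+t),\quad \theta(t)=\theta_0+t,\qquad t\in(0,t_{\max}),$$ (an arc of radius $R$ with centre angle $t_{\max}$), and let the anchoring point have world coordinates $\tilde x(t)=x(t)+\cos\theta(t)\Delta x-\sin\theta(t)\Delta y$, $\tilde y(t)=y(t)+\sin\theta(t)\Delta x+\cos\theta(t)\Delta y$, assumed different from $(o_x,o_y)$ for all $t$. Define $$A=o_x-x_0+R\sin\theta_0,\quad B=o_y-y_0-R\cos\theta_0,\quad C=A\Delta x-BR+B\Delta y,\quad D=AR-A\Delta y+B\Delta x,$$ assume $(C,D)\neq(0,0)$, and let $\varphi$ be the angle with $\cos\varphi=\frac{C}{\sqrt{C^2+D^2}}$, $\sin\varphi=\frac{D}{\sqrt{C^2+D^2}}$. If either $$\frac{A^2+B^2}{\sqrt{C^2+D^2}}>\cos(t+\theta_0-\varphi)\ \text{ for all } t\in(0,t_{\max}),$$ or $$\frac{A^2+B^2}{\sqrt{C^2+D^2}}<\cos(t+\theta_0-\varphi)\ \text{ for all } t\in(0,t_{\max}),$$ then the relative angle function $\Phi(t)=\arctan\left(\frac{o_y-\tilde y(t)}{o_x-\tilde x(t)}\right)-\theta(t)$ is monotonic on $(0,t_{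\max})$.
   Context: $(\Delta x,\Delta y)$ is the position of the tether–robot anchoring point $s$ in the robot's egocentric frame, and $(o_x,o_y)$ is the (fixed) position of the last tether–obstacle contact point $o$ in the world frame. In $\Phi$, $\arctan\left(\frac{o_y-\tilde y}{o_x-\tilde x}\right)$ denotes the direction angle of the vector from $(\tilde x,\tilde y)$ to $(o_x,o_y)$, taken as a continuous (differentiable) branch along the path. *)

theory Defs
  imports "HOL-Analysis.Analysis"
begin

definition arc_x :: "real \<Rightarrow> real \<Rightarrow> real \<Rightarrow> real \<Rightarrow> real" where
  "arc_x x0 \<theta>0 R t = x0 - R * sin \<theta>0 + R * sin (\<theta>0 + t)"

definition arc_y :: "real \<Rightarrow> real \<Rightarrow> real \<Rightarrow> real \<Rightarrow> real" where
  "arc_y y0 \<theta>0 R t = y0 + R * cos \<theta>0 - R * cos (\<theta>0 + t)"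

definition arc_theta :: "real \<Rightarrow> real \<Rightarrow> real" where
  "arc_theta \<theta>0 t = \<theta>0 + t"

definition anchor_x :: "real \<Rightarrow> real \<Rightarrow> real \<Rightarrow> real \<Rightarrow> real \<Rightarrow> real \<Rightarrow> real" where
  "anchor_x dx dy x0 \<theta>0 R t =
     arc_x x0 \<theta>0 R t + cos (arc_theta \<theta>0 t) * dx - sin (arc_theta \<theta>0 t) * dy"

definition anchor_y :: "real \<Rightarrow> real \<Rightarrow> real \<Rightarrow> real \<Rightarrow> real \<Rightarrow> real \<Rightarrow> real" where
  "anchor_y dx dy y0 \<theta>0 R t =
     arc_y y0 \<theta>0 R t + sin (arc_theta \<theta>0 t) * dx + cos (arc_theta \<theta>0 t) * dy"

end

theory Submission imports Defs begin

lemma lift_deriv: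
  fixes u v \<alpha> :: "real \<Rightarrow> real"
  assumes S: "open S" "t0 \<in> S" and cont: "continuous_on S \<alpha>"
    and dir: "\<forall>t\<in>S. \<exists>r>0. u t = r * cos (\<alpha> t) \<and> v t = r * sin (\<alpha> t)"
    and du: "(u has_real_derivative u') (at t0)"
    and dv: "(v has_real_derivative v') (at t0)"
  shows "(\<alpha> has_real_derivative (u t0 * v' - v t0 * u') / ((u t0)\<^sup>2 + (v t0)\<^sup>2)) (at t0)"
proof -
  define a where "a = \<alpha> t0"
  have "isCont \<alpha> t0" using cont S continuous_on_eq_continuous_at by blast
  then obtain e where e: "e > 0" "\<And>t. dist t t0 < e \<Longrightarrow> dist (\<alpha> t) a < pi/2"
    using \<open>isCont \<alpha> t0\<close>[unfolded continuous_at_eps_delta, rule_format, OF pi_half_gt_zero]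
    unfolding a_def by blast
  define T where "T = S \<inter> ball t0 e"
  have T: "open T" "t0 \<in> T" using S e by (auto simp: T_def)
  define f where "f t = u t * cos a + v t * sin a" for t
  define g where "g t = v t * cos a - u t * sin a" for t
  define h where "h t = a + arctan (g t / f t)" for t
  have eq: "h t = \<alpha> t" if "t \<in> T" for t
  proof -
    from that dir obtain r where r: "r > 0" "u t = r * cos (\<alpha> t)" "v t = r * sin (\<alpha> t)"
      by (auto simp: T_def)
    have d: "\<bar>\<alpha> t - a\<bar> < pi/2" using e(2)[of t] that by (auto simp: T_def dist_real_def dist_commute)
    have "f t = r * cos (\<alpha> t - a)" unfolding f_def r cos_diff by (simp add: algebra_simps)
    moreover have "g t = r * sin (\<alpha> t - a)" unfolding g_def r sin_diff by (simp add: algebra_simps)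
    ultimately have "g t / f t = tan (\<alpha> t - a)" using r(1) by (simp add: tan_def)
    moreover have "arctan (tan (\<alpha> t - a)) = \<alpha> t - a" using d by (intro arctan_tan) arith+
    ultimately show ?thesis unfolding h_def by simp
  qed
  obtain r0 where r0: "r0 > 0" "u t0 = r0 * cos a" "v t0 = r0 * sin a"
    using dir S a_def by blast
  have f0: "f t0 = r0"
  proof -
    have "f t0 = r0 * (cos a * cos a + sin a * sin a)" unfolding f_def r0 by algebra
    then show ?thesis by (simp only: sin_cos_squared_add3 mult_1_right)
  qed
  have g0: "g t0 = 0" unfolding g_def r0 by (simp add: algebra_simps)
  have uv0: "(u t0)\<^sup>2 + (v t0)\<^sup>2 = r0\<^sup>2"
  proof -
    have "(u t0)\<^sup>2 + (v t0)\<^sup>2 = r0\<^sup>2 * (cos a * cos a + sin a * sin a)" unfolding r0 by algebra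
    then show ?thesis by (simp only: sin_cos_squared_add3 mult_1_right)
  qed
  have dh: "(h has_real_derivative (v' * cos a - u' * sin a) / r0) (at t0)"
  proof -
    have df: "(f has_real_derivative u' * cos a + v' * sin a) (at t0)"
      unfolding f_def by (auto intro!: derivative_eq_intros du dv)
    have dg: "(g has_real_derivative v' * cos a - u' * sin a) (at t0)"
      unfolding g_def by (auto intro!: derivative_eq_intros du dv)
    have dq: "((\<lambda>t. g t / f t) has_real_derivative
       ((v' * cos a - u' * sin a) * f t0 - g t0 * (u' * cos a + v' * sin a)) / (f t0 * f t0)) (at t0)"
      by (rule DERIV_divide[OF dg df]) (use f0 r0 in simp)
    have "((\<lambda>t. arctan (g t / f t)) has_real_derivative inverse (1 + (g t0 / f t0)\<^sup>2) *
       (((v' * cos a - u' * sin a) * f t0 - g t0 * (u' * cos a + v' * sin a)) / (f t0 * f t0))) (at t0)"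
      by (rule DERIV_chain2[OF DERIV_arctan dq])
    then have "(h has_real_derivative 0 + inverse (1 + (g t0 / f t0)\<^sup>2) *
       (((v' * cos a - u' * sin a) * f t0 - g t0 * (u' * cos a + v' * sin a)) / (f t0 * f t0))) (at t0)"
      unfolding h_def by (intro DERIV_add DERIV_const)
    then show ?thesis using f0 g0 r0 by simp
  qed
  have "(\<alpha> has_real_derivative (v' * cos a - u' * sin a) / r0) (at t0)"
    by (rule has_field_derivative_transform_within_open[OF dh T]) (simp add: eq)
  moreover have "(u t0 * v' - v t0 * u') / ((u t0)\<^sup>2 + (v t0)\<^sup>2) = (v' * cos a - u' * sin a) / r0"
  proof -
    have "u t0 * v' - v t0 * u' = r0 * (v' * cos a - u' * sin a)" unfolding r0 by (simp add: algebra_simps)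
    then show ?thesis unfolding uv0 using r0(1) by (simp add: power2_eq_square)
  qed
  ultimately show ?thesis by simp
qed
theorem theorem3:
  fixes dx dy ox oy x0 y0 \<theta>0 R tmax A B C D \<phi> :: real
    and \<alpha> :: "real \<Rightarrow> real"
  assumes R_pos: "R > 0" and tmax_pos: "tmax > 0"
    and anchor_ne: "\<forall>t\<in>{0<..<tmax}.
         (anchor_x dx dy x0 \<theta>0 R t, anchor_y dx dy y0 \<theta>0 R t) \<noteq> (ox, oy)"
    and A_def: "A = ox - x0 + R * sin \<theta>0"
    and B_def: "B = oy - y0 - R * cos \<theta>0"
    and C_def: "C = A * dx - B * R + B * dy"
    and D_def: "D = A * R - A * dy + B * dx"
    and CD_nz: "(C, D) \<noteq> (0, 0)"
    and phi_cos: "cos \<phi> = C / sqrt (C\<^sup>2 + D\<^sup>2)"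
    and phi_sin: "sin \<phi> = D / sqrt (C\<^sup>2 + D\<^sup>2)"
    and alpha_cont: "continuous_on {0<..<tmax} \<alpha>"
    and alpha_dir: "\<forall>t\<in>{0<..<tmax}. \<exists>r>0.
         ox - anchor_x dx dy x0 \<theta>0 R t = r * cos (\<alpha> t) \<and>
         oy - anchor_y dx dy y0 \<theta>0 R t = r * sin (\<alpha> t)"
    and cond: "(\<forall>t\<in>{0<..<tmax}. (A\<^sup>2 + B\<^sup>2) / sqrt (C\<^sup>2 + D\<^sup>2) > cos (t + \<theta>0 - \<phi>))
             \<or> (\<forall>t\<in>{0<..<tmax}. (A\<^sup>2 + B\<^sup>2) / sqrt (C\<^sup>2 + D\<^sup>2) < cos (t + \<theta>0 - \<phi>))"
  shows "mono_on {0<..<tmax} (\<lambda>t. \<alpha> t - arc_theta \<theta>0 t)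
       \<or> antimono_on {0<..<tmax} (\<lambda>t. \<alpha> t - arc_theta \<theta>0 t)"
proof -
  define u where "u t = ox - anchor_x dx dy x0 \<theta>0 R t" for t
  define v where "v t = oy - anchor_y dx dy y0 \<theta>0 R t" for t
  define F where "F t = \<alpha> t - arc_theta \<theta>0 t" for t
  define K where "K = sqrt (C\<^sup>2 + D\<^sup>2)"
  have Kpos: "K > 0" using CD_nz unfolding K_def
    by (metis add_nonneg_nonneg order_less_le prod.inject real_sqrt_gt_zero sum_power2_eq_zero_iff zero_le_power2)
  have ueq: "u t = A - dx * cos (\<theta>0 + t) - (R - dy) * sin (\<theta>0 + t)" for t
    unfolding u_def anchor_x_def arc_x_def arc_theta_def A_def by (simp add: algebra_simps)
  have veq: "v t = B - dx * sin (\<theta>0 + t) + (R - dy) * cos (\<theta>0 + t)" for t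
    unfolding v_def anchor_y_def arc_y_def arc_theta_def B_def by (simp add: algebra_simps)
  define G where "G t = - (A\<^sup>2 + B\<^sup>2 - K * cos (t + \<theta>0 - \<phi>)) / ((u t)\<^sup>2 + (v t)\<^sup>2)" for t
  have Kc: "K * cos (t + \<theta>0 - \<phi>) = C * cos (\<theta>0 + t) + D * sin (\<theta>0 + t)" for t
    unfolding cos_diff phi_cos phi_sin K_def[symmetric] using Kpos by (simp add: field_simps add.commute)
  have der: "(F has_real_derivative G t) (at t)" if t: "t \<in> {0<..<tmax}" for t
  proof -
    define c where "c = cos (\<theta>0 + t)"
    define s where "s = sin (\<theta>0 + t)"
    have du: "(u has_real_derivative dx * s - (R - dy) * c) (at t)"
      unfolding ueq[abs_def] c_def s_def by (auto intro!: derivative_eq_intros)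
    have dv: "(v has_real_derivative - dx * c - (R - dy) * s) (at t)"
      unfolding veq[abs_def] c_def s_def by (auto intro!: derivative_eq_intros)
    have da: "(\<alpha> has_real_derivative (u t * (- dx * c - (R - dy) * s) - v t * (dx * s - (R - dy) * c)) / ((u t)\<^sup>2 + (v t)\<^sup>2)) (at t)"
      by (rule lift_deriv[OF _ t alpha_cont _ du dv]) (use alpha_dir in \<open>auto simp: u_def v_def\<close>)
    have N: "(u t)\<^sup>2 + (v t)\<^sup>2 \<noteq> 0"
      using anchor_ne t unfolding u_def v_def by (auto simp: power2_eq_square add_nonneg_eq_0_iff)
    have "(F has_real_derivative (u t * (- dx * c - (R - dy) * s) - v t * (dx * s - (R - dy) * c)) / ((u t)\<^sup>2 + (v t)\<^sup>2) - 1) (at t)"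
      unfolding F_def[abs_def] arc_theta_def by (auto intro!: derivative_eq_intros da)
    moreover have "(u t * (- dx * c - (R - dy) * s) - v t * (dx * s - (R - dy) * c)) / ((u t)\<^sup>2 + (v t)\<^sup>2) - 1 = G t"
    proof -
      have "u t * (- dx * c - (R - dy) * s) - v t * (dx * s - (R - dy) * c) - ((u t)\<^sup>2 + (v t)\<^sup>2)
          = - (A\<^sup>2 + B\<^sup>2 - (C * c + D * s))"
        unfolding ueq veq C_def D_def c_def[symmetric] s_def[symmetric] by (simp add: algebra_simps power2_eq_square)
      then show ?thesis unfolding G_def Kc c_def[symmetric] s_def[symmetric] using N by (simp add: field_simps)
    qed
    ultimately show ?thesis by simp
  qed
  have Npos: "(u t)\<^sup>2 + (v t)\<^sup>2 > 0" if t: "t \<in> {0<..<tmax}" for t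
    using anchor_ne t unfolding u_def v_def by (auto simp: power2_eq_square add_pos_nonneg sum_squares_gt_zero_iff)
  have Feq: "F = (\<lambda>t. \<alpha> t - arc_theta \<theta>0 t)" by (simp add: F_def fun_eq_iff)
  from cond show ?thesis
  proof
    assume h: "\<forall>t\<in>{0<..<tmax}. (A\<^sup>2 + B\<^sup>2) / sqrt (C\<^sup>2 + D\<^sup>2) > cos (t + \<theta>0 - \<phi>)"
    have Gneg: "G t < 0" if t: "t \<in> {0<..<tmax}" for t
    proof -
      have "cos (t + \<theta>0 - \<phi>) < (A\<^sup>2 + B\<^sup>2) / K" using h t unfolding K_def by blast
      then have "K * cos (t + \<theta>0 - \<phi>) < A\<^sup>2 + B\<^sup>2" using Kpos by (simp add: pos_less_divide_eq mult.commute)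
      then show ?thesis unfolding G_def using Npos[OF t] by (simp add: divide_neg_pos)
    qed
    have "antimono_on {0<..<tmax} F"
    proof (rule monotone_onI)
      fix x y assume xy: "x \<in> {0<..<tmax}" "y \<in> {0<..<tmax}" "x \<le> y"
      show "F y \<le> F x"
      proof (cases "x = y")
        case False
        then have "x < y" using xy by simp
        have "\<exists>z. x < z \<and> z < y \<and> F y - F x = (y - x) * G z"
          by (rule MVT2[OF \<open>x < y\<close>], rule der) (use xy in auto)
        then obtain z where "x < z" "z < y" "F y - F x = (y - x) * G z" by blast
        moreover have "G z < 0" using xy \<open>x < z\<close> \<open>z < y\<close> by (intro Gneg) simp
        moreover have "(y - x) * G z < 0" using \<open>G z < 0\<close> \<open>x < y\<close> by (intro mult_pos_neg) auto
        ultimately show ?thesis by linarith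
      qed simp
    qed
    then show ?thesis unfolding Feq by (rule disjI2)
  next
    assume h: "\<forall>t\<in>{0<..<tmax}. (A\<^sup>2 + B\<^sup>2) / sqrt (C\<^sup>2 + D\<^sup>2) < cos (t + \<theta>0 - \<phi>)"
    have Gpos: "G t > 0" if t: "t \<in> {0<..<tmax}" for t
    proof -
      have "cos (t + \<theta>0 - \<phi>) > (A\<^sup>2 + B\<^sup>2) / K" using h t unfolding K_def by blast
      then have "K * cos (t + \<theta>0 - \<phi>) > A\<^sup>2 + B\<^sup>2" using Kpos by (simp add: pos_divide_less_eq mult.commute)
      then show ?thesis unfolding G_def using Npos[OF t] by (simp add: divide_pos_pos)
    qed
    have "mono_on {0<..<tmax} F"
    proof (rule mono_onI)
      fix x y assume xy: "x \<in> {0<..<tmax}" "y \<in> {0<..<tmax}" "x \<le> y"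
      show "F x \<le> F y"
      proof (cases "x = y")
        case False
        then have "x < y" using xy by simp
        have "\<exists>z. x < z \<and> z < y \<and> F y - F x = (y - x) * G z"
          by (rule MVT2[OF \<open>x < y\<close>], rule der) (use xy in auto)
        then obtain z where "x < z" "z < y" "F y - F x = (y - x) * G z" by blast
        moreover have "G z > 0" using xy \<open>x < z\<close> \<open>z < y\<close> by (intro Gpos) simp
        moreover have "(y - x) * G z > 0" using \<open>G z > 0\<close> \<open>x < y\<close> by (intro mult_pos_pos) auto
        ultimately show ?thesis by linarith
      qed simp
    qed
    then show ?thesis unfolding Feq by (rule disjI1)
  qed
qed

end
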